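(* Let $G$ be a cycle of cliques with cliques $\{C_1,\dots,C_\ell\}$. If there are two cliques $C_i$ and $C_j$ with $C_{i,i}$ and $C_{j,j}$ non-empty, then $Z_+(G)=|V(G)|-\operatorname{cc}(G)$.
   Context: $\operatorname{cc}(G)$ is the minimum number of cliques needed to cover all edges of $G$. A min-max clique covering is a clique covering of size $\operatorname{cc}(G)$ consisting of maximal cliques. $G$ is a cycle of cliques (with cliques $\{C_1,\dots,C_\ell\}$) if $\{C_1,\dots,C_\ell\}$ is a min-max clique covering of $G$ with $C_i\cap C_{i+1}\neq\emptyset$ for $i=1,\dots,\ell-1$ and $C_1\cap C_\ell\neq\emptyset$, while all other pairwise intersections are empty. $C_{i,i}=C_i\setminus\bigcup_{j\ne i}C_j$. $Z_+(G)$ is the positive zero forcing number: the minimum size of a set $B$ of initially black vertices such that repeated application of the rule "let $W_1,\dots,W_k$ be the vertex sets of components of $G$ minus the black vertices; a black vertex $u$ whose only white neighbour in the subgraph induced by $W_i\cup(\text{black vertices})$ is $w$ may turn $w$ black" eventually makes all vertices black. *)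

theory Defs
  imports Main
begin

definition graph :: "'a set \<Rightarrow> ('a \<Rightarrow> 'a \<Rightarrow> bool) \<Rightarrow> bool" where
  "graph V E \<longleftrightarrow> finite V \<and> (\<forall>u v. E u v \<longrightarrow> E v u) \<and> (\<forall>u. \<not> E u u)
     \<and> (\<forall>u v. E u v \<longrightarrow> u \<in> V \<and> v \<in> V)"

definition is_clique :: "'a set \<Rightarrow> ('a \<Rightarrow> 'a \<Rightarrow> bool) \<Rightarrow> 'a set \<Rightarrow> bool" where
  "is_clique V E C \<longleftrightarrow> C \<subseteq> V \<and> (\<forall>x\<in>C. \<forall>y\<in>C. x \<noteq> y \<longrightarrow> E x y)"

definition is_maximal_clique :: "'a set \<Rightarrow> ('a \<Rightarrow> 'a \<Rightarrow> bool) \<Rightarrow> 'a set \<Rightarrow> bool" where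
  "is_maximal_clique V E C \<longleftrightarrow> is_clique V E C \<and> (\<forall>D. is_clique V E D \<and> C \<subseteq> D \<longrightarrow> D = C)"

definition clique_covering :: "'a set \<Rightarrow> ('a \<Rightarrow> 'a \<Rightarrow> bool) \<Rightarrow> 'a set set \<Rightarrow> bool" where
  "clique_covering V E \<C> \<longleftrightarrow> finite \<C> \<and> (\<forall>C\<in>\<C>. is_clique V E C)
     \<and> (\<forall>u v. E u v \<longrightarrow> (\<exists>C\<in>\<C>. u \<in> C \<and> v \<in> C))"

definition cc :: "'a set \<Rightarrow> ('a \<Rightarrow> 'a \<Rightarrow> bool) \<Rightarrow> nat" where
  "cc V E = (LEAST k. \<exists>\<C>. clique_covering V E \<C> \<and> card \<C> = k)"

definition min_max_clique_covering :: "'a set \<Rightarrow> ('a \<Rightarrow> 'a \<Rightarrow> bool) \<Rightarrow> 'a set set \<Rightarrow> bool" where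
  "min_max_clique_covering V E \<C> \<longleftrightarrow> clique_covering V E \<C> \<and> card \<C> = cc V E
     \<and> (\<forall>C\<in>\<C>. is_maximal_clique V E C)"

definition cycle_of_cliques :: "'a set \<Rightarrow> ('a \<Rightarrow> 'a \<Rightarrow> bool) \<Rightarrow> nat \<Rightarrow> (nat \<Rightarrow> 'a set) \<Rightarrow> bool" where
  "cycle_of_cliques V E l C \<longleftrightarrow>
     inj_on C {1..l} \<and> min_max_clique_covering V E (C ` {1..l})
     \<and> (\<forall>i\<in>{1..l}. \<forall>j\<in>{1..l}. i \<noteq> j \<longrightarrow>
          (C i \<inter> C j \<noteq> {} \<longleftrightarrow> (j = i + 1 \<or> i = j + 1 \<or> {i, j} = {1, l})))"

text \<open>C_{i,i} = C_i minus the union of the other cliques.\<close>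
definition private_part :: "nat \<Rightarrow> (nat \<Rightarrow> 'a set) \<Rightarrow> nat \<Rightarrow> 'a set" where
  "private_part l C i = C i - (\<Union>j\<in>{1..l} - {i}. C j)"

definition component_of :: "('a \<Rightarrow> 'a \<Rightarrow> bool) \<Rightarrow> 'a set \<Rightarrow> 'a \<Rightarrow> 'a set" where
  "component_of E X x = {y. (\<lambda>a b. a \<in> X \<and> b \<in> X \<and> E a b)\<^sup>*\<^sup>* x y}"

definition is_component :: "('a \<Rightarrow> 'a \<Rightarrow> bool) \<Rightarrow> 'a set \<Rightarrow> 'a set \<Rightarrow> bool" where
  "is_component E X W \<longleftrightarrow> (\<exists>x\<in>X. W = component_of E X x)"

inductive pzf_reach :: "'a set \<Rightarrow> ('a \<Rightarrow> 'a \<Rightarrow> bool) \<Rightarrow> 'a set \<Rightarrow> 'a set \<Rightarrow> bool"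
  for V E B where
  start: "pzf_reach V E B B"
| force: "\<lbrakk> pzf_reach V E B S; u \<in> S; is_component E (V - S) W; w \<in> W; E u w;
            \<forall>x\<in>W. E u x \<longrightarrow> x = w \<rbrakk> \<Longrightarrow> pzf_reach V E B (insert w S)"

definition pzf_set :: "'a set \<Rightarrow> ('a \<Rightarrow> 'a \<Rightarrow> bool) \<Rightarrow> 'a set \<Rightarrow> bool" where
  "pzf_set V E B \<longleftrightarrow> B \<subseteq> V \<and> pzf_reach V E B V"

definition Z_plus :: "'a set \<Rightarrow> ('a \<Rightarrow> 'a \<Rightarrow> bool) \<Rightarrow> nat" where
  "Z_plus V E = (LEAST k. \<exists>B. pzf_set V E B \<and> card B = k)"

end

theory Submission
  imports Defs
begin


lemma comp_sub: "x \<in> X \<Longrightarrow> component_of E X x \<subseteq> X"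
proof
  fix y assume x: "x \<in> X" and "y \<in> component_of E X x"
  then have "(\<lambda>a b. a \<in> X \<and> b \<in> X \<and> E a b)\<^sup>*\<^sup>* x y" by (simp add: component_of_def)
  then show "y \<in> X" using x by (induction rule: rtranclp_induct) auto
qed

lemma comp_closed: "y \<in> component_of E X x \<Longrightarrow> y \<in> X \<Longrightarrow> z \<in> X \<Longrightarrow> E y z \<Longrightarrow> z \<in> component_of E X x"
  unfolding component_of_def by (auto intro: rtranclp.rtrancl_into_rtrancl)

lemma comp_single: "\<forall>z\<in>X. \<not> E w z \<Longrightarrow> component_of E X w = {w}"
proof -
  assume h: "\<forall>z\<in>X. \<not> E w z"
  have "y = w" if "(\<lambda>a b. a \<in> X \<and> b \<in> X \<and> E a b)\<^sup>*\<^sup>* w y" for y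
    using that by (rule converse_rtranclpE) (use h in auto)
  then show ?thesis unfolding component_of_def by auto
qed

lemma force_rank:
  fixes rk :: "'i \<Rightarrow> nat"
  assumes G: "graph V E" and fin: "finite I" and sub: "wv ` I \<subseteq> V" and inj: "inj_on wv I" and injr: "inj_on rk I"
  and H: "\<And>k. k \<in> I \<Longrightarrow> \<exists>u\<in>V. u \<notin> wv ` {m\<in>I. rk k \<le> rk m} \<and> E u (wv k) \<and>
     ((\<forall>m\<in>I. rk k < rk m \<longrightarrow> \<not> E u (wv m)) \<or> (\<forall>m\<in>I. rk k < rk m \<longrightarrow> \<not> E (wv k) (wv m)))"
  shows "pzf_reach V E (V - wv ` I) V"
proof -
  have irr: "\<And>x. \<not> E x x" using G by (simp add: graph_def)
  have step: "pzf_reach V E (V - wv ` I) (V - wv ` {m\<in>I. n \<le> rk m})" for n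
  proof (induction n)
    case 0 show ?case by (simp add: pzf_reach.start)
  next
    case (Suc n)
    show ?case
    proof (cases "\<exists>k\<in>I. rk k = n")
      case False
      then have "{m\<in>I. Suc n \<le> rk m} = {m\<in>I. n \<le> rk m}" by (auto simp: le_eq_less_or_eq Suc_le_eq)
      with Suc show ?thesis by simp
    next
      case True
      then obtain k where k: "k\<in>I" "rk k = n" by blast
      define S where "S = V - wv ` {m\<in>I. n \<le> rk m}"
      have VS: "V - S = wv ` {m\<in>I. n \<le> rk m}" using sub by (auto simp: S_def)
      have e1: "{m\<in>I. n \<le> rk m} = insert k {m\<in>I. Suc n \<le> rk m}"
        using k injr by (auto simp: le_eq_less_or_eq Suc_le_eq inj_on_def)
      have kn: "wv k \<notin> wv ` {m\<in>I. Suc n \<le> rk m}" using k inj by (auto simp: inj_on_def)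
      have new: "V - wv ` {m\<in>I. Suc n \<le> rk m} = insert (wv k) S"
        unfolding S_def e1 using kn sub k by auto
      obtain u where u: "u\<in>V" "u \<notin> wv ` {m\<in>I. rk k \<le> rk m}" "E u (wv k)"
        and alt: "(\<forall>m\<in>I. rk k < rk m \<longrightarrow> \<not> E u (wv m)) \<or> (\<forall>m\<in>I. rk k < rk m \<longrightarrow> \<not> E (wv k) (wv m))"
        using H[OF k(1)] by blast
      define W where "W = component_of E (V - S) (wv k)"
      have wkX: "wv k \<in> V - S" using VS k by auto
      have wW: "wv k \<in> W" by (simp add: W_def component_of_def)
      have isc: "is_component E (V - S) W" using wkX W_def unfolding is_component_def by auto
      have uS: "u \<in> S" using u k by (auto simp: S_def)
      have WX: "W \<subseteq> V - S" using comp_sub[OF wkX] W_def by simp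
      have only: "\<forall>x\<in>W. E u x \<longrightarrow> x = wv k"
        using alt
      proof
        assume a: "\<forall>m\<in>I. rk k < rk m \<longrightarrow> \<not> E u (wv m)"
        show ?thesis
        proof (intro ballI impI)
          fix x assume "x \<in> W" "E u x"
          then obtain m where m: "m \<in> I" "n \<le> rk m" "x = wv m" using WX VS by auto
          show "x = wv k"
          proof (cases "rk k < rk m")
            case True with a m \<open>E u x\<close> show ?thesis by auto
          next
            case False then have "rk m = rk k" using m k by auto
            then have "m = k" using injr m k by (auto simp: inj_on_def)
            then show ?thesis using m by simp
          qed
        qed
      next
        assume b: "\<forall>m\<in>I. rk k < rk m \<longrightarrow> \<not> E (wv k) (wv m)"
        have "\<forall>z\<in>V - S. \<not> E (wv k) z"
        proof
          fix z assume "z \<in> V - S"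
          then obtain m where m: "m \<in> I" "n \<le> rk m" "z = wv m" using VS by auto
          show "\<not> E (wv k) z"
          proof (cases "m = k")
            case True then show ?thesis using m irr by simp
          next
            case False then have "rk m \<noteq> rk k" using injr m k by (auto simp: inj_on_def)
            then show ?thesis using b m k by auto
          qed
        qed
        then have "W = {wv k}" unfolding W_def by (rule comp_single)
        then show ?thesis by simp
      qed
      have "pzf_reach V E (V - wv ` I) (insert (wv k) S)"
        by (rule pzf_reach.force[OF Suc.IH[folded S_def] uS isc wW u(3) only])
      then show ?thesis using new by simp
    qed
  qed
  define n where "n = Suc (Max (insert 0 (rk ` I)))"
  have "{m\<in>I. n \<le> rk m} = {}"
  proof -
    have "rk m \<le> Max (insert 0 (rk ` I))" if "m \<in> I" for m using fin that by (intro Max_ge) auto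
    then show ?thesis unfolding n_def by (auto simp: Suc_le_eq leD)
  qed
  then show ?thesis using step[of n] by (metis Diff_empty image_empty)
qed

lemma lower:
  assumes G: "graph V E" and cov: "clique_covering V E \<C>" and r: "pzf_reach V E B S" and BV: "B \<subseteq> V"
  shows "\<exists>F\<subseteq>\<C>. card F + card B = card S \<and> (\<forall>K\<in>F. K \<subseteq> S) \<and> S \<subseteq> V \<and> B \<subseteq> S"
  using r
proof (induction rule: pzf_reach.induct)
  case start then show ?case using BV by (intro exI[of _ "{}"]) auto
next
  case (force S u W w)
  then obtain F where F: "F \<subseteq> \<C>" "card F + card B = card S" "\<forall>K\<in>F. K \<subseteq> S" "S \<subseteq> V" "B \<subseteq> S" by blast
  have finV: "finite V" using G by (simp add: graph_def)
  have finC: "finite \<C>" using cov by (simp add: clique_covering_def)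
  obtain y where y: "y \<in> V - S" "W = component_of E (V - S) y" using force.hyps(3) by (auto simp: is_component_def)
  have WX: "W \<subseteq> V - S" using comp_sub[OF y(1)] y(2) by simp
  have wX: "w \<in> V - S" using WX force.hyps(4) by auto
  obtain K where K: "K \<in> \<C>" "u \<in> K" "w \<in> K" using cov \<open>E u w\<close> unfolding clique_covering_def by blast
  have Kcl: "is_clique V E K" using cov K by (auto simp: clique_covering_def)
  have KF: "K \<notin> F" using F(3) K wX by auto
  have Ksub: "K \<subseteq> insert w S"
  proof
    fix x assume xK: "x \<in> K"
    show "x \<in> insert w S"
    proof (rule ccontr)
      assume nx: "x \<notin> insert w S"
      have xV: "x \<in> V" using Kcl xK by (auto simp: is_clique_def)
      have Ewx: "E w x" using Kcl xK K nx by (auto simp: is_clique_def)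
      have "x \<in> W" using comp_closed[of w E "V - S" y x] force.hyps(4) y wX xV nx Ewx by auto
      moreover have "E u x" using Kcl xK K nx force.hyps(2) by (auto simp: is_clique_def)
      ultimately have "x = w" using force.hyps(6) by auto
      then show False using nx by simp
    qed
  qed
  have fS: "finite S" using F(4) finV finite_subset by blast
  have fF: "finite F" using F(1) finC finite_subset by blast
  show ?case
    apply (rule exI[of _ "insert K F"])
    using F K KF Ksub wX fS fF force.hyps(2) by auto
qed



definition adj :: "nat \<Rightarrow> nat \<Rightarrow> nat \<Rightarrow> bool" where
  "adj l a b \<longleftrightarrow> b = a + 1 \<or> a = b + 1 \<or> (a = 1 \<and> b = l) \<or> (a = l \<and> b = 1)"

lemma no_triangle: "4 \<le> l \<Longrightarrow> a \<in> {1..l} \<Longrightarrow> b \<in> {1..l} \<Longrightarrow> c \<in> {1..l} \<Longrightarrow> a \<noteq> b \<Longrightarrow> a \<noteq> c \<Longrightarrow> b \<noteq> c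
  \<Longrightarrow> adj l a b \<Longrightarrow> adj l a c \<Longrightarrow> adj l b c \<Longrightarrow> False"
  unfolding adj_def by auto

definition Ss :: "nat \<Rightarrow> nat \<Rightarrow> nat \<Rightarrow> nat set" where
  "Ss l r t = (if t = 1 then {1} else if t < r then {t, t+1} else if t = r then {r} else {t, t-1})"
definition rk :: "nat \<Rightarrow> nat \<Rightarrow> nat \<Rightarrow> nat" where
  "rk l r k = (if k = 1 then 0 else if k < r then k else if k = r then 2*l else 2*l - k)"
definition ua :: "nat \<Rightarrow> nat \<Rightarrow> nat \<Rightarrow> nat" where
  "ua l r k = (if k = 1 then 1 else if k \<le> r then k - 1 else k)"
definition ub :: "nat \<Rightarrow> nat \<Rightarrow> nat \<Rightarrow> nat" where
  "ub l r k = (if k = 1 then 2 else if k \<le> r then k else if k = l then 1 else k + 1)"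

context fixes l r :: nat assumes l4: "4 \<le> l" and r: "2 \<le> r" "r \<le> l"
begin
lemma Ss_self: "t \<in> Ss l r t" by (simp add: Ss_def)
lemma Ss_range: "t \<in> {1..l} \<Longrightarrow> Ss l r t \<subseteq> {1..l}" using l4 r by (auto simp: Ss_def)
lemma Ss_inj: "s \<in> {1..l} \<Longrightarrow> t \<in> {1..l} \<Longrightarrow> s \<in> Ss l r t \<Longrightarrow> t \<in> Ss l r s \<Longrightarrow> s = t"
  using l4 r by (auto simp: Ss_def split: if_splits)
lemma rk_inj: "inj_on (rk l r) {1..l}"
  using l4 r unfolding inj_on_def rk_def by (auto split: if_splits)
lemma uab_range: "k \<in> {1..l} \<Longrightarrow> ua l r k \<in> {1..l} \<and> ub l r k \<in> {1..l} \<and> ua l r k \<noteq> ub l r k \<and> adj l (ua l r k) (ub l r k)"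
  using l4 r by (auto simp: ua_def ub_def adj_def)
lemma uab_self: "k = ua l r k \<or> k = ub l r k"
  by (auto simp: ua_def ub_def)
lemma F1: "k \<in> {1..l} \<Longrightarrow> m \<in> {1..l} \<Longrightarrow> rk l r k \<le> rk l r m \<Longrightarrow> \<not> (ua l r k \<in> Ss l r m \<and> ub l r k \<in> Ss l r m)"
  using l4 r by (auto simp: ua_def ub_def Ss_def rk_def split: if_splits)
lemma F2: "k \<in> {1..l} \<Longrightarrow> m \<in> {1..l} \<Longrightarrow> k \<noteq> 1 \<Longrightarrow> rk l r k < rk l r m \<Longrightarrow> ua l r k \<notin> Ss l r m \<and> ub l r k \<notin> Ss l r m"
  using l4 r by (auto simp: ua_def ub_def Ss_def rk_def split: if_splits)
lemma F3: "m \<in> {1..l} \<Longrightarrow> m \<noteq> 1 \<Longrightarrow> 1 \<notin> Ss l r m"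
  using l4 r by (auto simp: Ss_def)
lemma Ss_pair: "t \<in> {1..l} \<Longrightarrow> t \<noteq> 1 \<Longrightarrow> t \<noteq> r \<Longrightarrow> \<exists>a. a \<in> {1..l} \<and> a \<noteq> t \<and> adj l t a \<and> Ss l r t = {t, a}"
proof (cases "t < r")
  case True
  assume "t \<in> {1..l}" "t \<noteq> 1" "t \<noteq> r"
  then show ?thesis using True l4 r by (intro exI[of _ "t+1"]) (auto simp: Ss_def adj_def)
next
  case False
  assume "t \<in> {1..l}" "t \<noteq> 1" "t \<noteq> r"
  then show ?thesis using False l4 r by (intro exI[of _ "t-1"]) (auto simp: Ss_def adj_def)
qed
end


lemma clique_edge: "is_clique V E K \<Longrightarrow> x \<in> K \<Longrightarrow> y \<in> K \<Longrightarrow> x \<noteq> y \<Longrightarrow> E x y"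
  by (simp add: is_clique_def)

lemma big:
  fixes D :: "nat \<Rightarrow> 'a set"
  assumes G: "graph V E"
  and cl: "\<forall>t\<in>{1..l}. is_clique V E (D t)"
  and cov: "\<forall>u v. E u v \<longrightarrow> (\<exists>t\<in>{1..l}. u \<in> D t \<and> v \<in> D t)"
  and ad: "\<forall>a\<in>{1..l}. \<forall>b\<in>{1..l}. a \<noteq> b \<longrightarrow> (D a \<inter> D b \<noteq> {} \<longleftrightarrow> adj l a b)"
  and l4: "4 \<le> l" and p1: "p \<in> D 1" and p2: "\<forall>t\<in>{1..l}. t \<noteq> 1 \<longrightarrow> p \<notin> D t"
  and q1: "q \<in> D r" and q2: "\<forall>t\<in>{1..l}. t \<noteq> r \<longrightarrow> q \<notin> D t" and r: "2 \<le> r" "r \<le> l"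
  shows "\<exists>B. pzf_set V E B \<and> card B = card V - l"
proof -
  have finV: "finite V" using G by (simp add: graph_def)
  have DV: "t \<in> {1..l} \<Longrightarrow> D t \<subseteq> V" for t using cl by (auto simp: is_clique_def)
  have adI: "D a \<inter> D b \<noteq> {} \<longleftrightarrow> adj l a b" if "a\<in>{1..l}" "b\<in>{1..l}" "a\<noteq>b" for a b
    using ad that by blast
  have key: "c = a \<or> c = b" if x: "x \<in> D a" "x \<in> D b" "x \<in> D c" and abc: "a\<in>{1..l}" "b\<in>{1..l}" "c\<in>{1..l}" "a\<noteq>b" for x a b c
  proof (rule ccontr)
    assume n: "\<not> ?thesis"
    have "adj l a b" using adI[of a b] abc x by blast
    moreover have "adj l a c" using adI[of a c] abc x n by blast
    moreover have "adj l b c" using adI[of b c] abc x n by blast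
    ultimately show False using no_triangle[OF l4 abc(1,2,3) abc(4)] n by auto
  qed
  define wv where "wv t = (if t = 1 then p else if t = r then q else SOME x. \<forall>s\<in>{1..l}. x \<in> D s \<longleftrightarrow> s \<in> Ss l r t)" for t
  have memb: "\<forall>s\<in>{1..l}. wv t \<in> D s \<longleftrightarrow> s \<in> Ss l r t" if t: "t \<in> {1..l}" for t
  proof (cases "t = 1")
    case True then show ?thesis using p1 p2 by (auto simp: wv_def Ss_def)
  next
    case t1: False
    show ?thesis
    proof (cases "t = r")
      case True then show ?thesis using q1 q2 t1 by (auto simp: wv_def Ss_def)
    next
      case tr: False
      obtain a where a: "a \<in> {1..l}" "a \<noteq> t" "adj l t a" "Ss l r t = {t, a}"
        using Ss_pair[OF l4 r t t1 tr] by blast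
      then obtain x where x: "x \<in> D t" "x \<in> D a" using adI[of t a] t by blast
      have "\<forall>s\<in>{1..l}. x \<in> D s \<longleftrightarrow> s \<in> Ss l r t"
        using key[of x t a] x t a by fastforce
      then have "\<exists>x. \<forall>s\<in>{1..l}. x \<in> D s \<longleftrightarrow> s \<in> Ss l r t" by blast
      from someI_ex[OF this] show ?thesis using t1 tr by (simp add: wv_def)
    qed
  qed
  have wvD: "t \<in> {1..l} \<Longrightarrow> wv t \<in> D t" for t using memb[of t] Ss_self[OF l4 r] by auto
  have wvV: "wv ` {1..l} \<subseteq> V" using wvD DV by blast
  have injw: "inj_on wv {1..l}"
  proof (rule inj_onI)
    fix s t assume st: "s \<in> {1..l}" "t \<in> {1..l}" "wv s = wv t"
    have "s \<in> Ss l r t" using memb[OF st(2)] wvD[OF st(1)] st by auto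
    moreover have "t \<in> Ss l r s" using memb[OF st(1)] wvD[OF st(2)] st by auto
    ultimately show "s = t" using Ss_inj[OF l4 r st(1,2)] by blast
  qed
  define uu where "uu k = (SOME x. x \<in> D (ua l r k) \<and> x \<in> D (ub l r k))" for k
  have uu: "uu k \<in> D (ua l r k) \<and> uu k \<in> D (ub l r k)" if k: "k \<in> {1..l}" for k
  proof -
    have "D (ua l r k) \<inter> D (ub l r k) \<noteq> {}" using uab_range[OF l4 r k] adI[of "ua l r k" "ub l r k"] by blast
    then have "\<exists>x. x \<in> D (ua l r k) \<and> x \<in> D (ub l r k)" by blast
    from someI_ex[OF this] show ?thesis by (simp add: uu_def)
  qed
  have uukey: "s = ua l r k \<or> s = ub l r k" if "k \<in> {1..l}" "s \<in> {1..l}" "uu k \<in> D s" for k s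
    using key[of "uu k" "ua l r k" "ub l r k" s] uu[OF that(1)] uab_range[OF l4 r that(1)] that by blast
  have edge: "\<exists>s\<in>{1..l}. x \<in> D s \<and> y \<in> D s" if "E x y" for x y using cov that by blast
  have H: "\<exists>u\<in>V. u \<notin> wv ` {m\<in>{1..l}. rk l r k \<le> rk l r m} \<and> E u (wv k) \<and>
     ((\<forall>m\<in>{1..l}. rk l r k < rk l r m \<longrightarrow> \<not> E u (wv m)) \<or> (\<forall>m\<in>{1..l}. rk l r k < rk l r m \<longrightarrow> \<not> E (wv k) (wv m)))"
    if k: "k \<in> {1..l}" for k
  proof (intro bexI[of _ "uu k"] conjI)
    have ur: "ua l r k \<in> {1..l}" "ub l r k \<in> {1..l}" using uab_range[OF l4 r k] by auto
    show uV: "uu k \<in> V" using uu[OF k] DV ur by auto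
    have notw: "uu k \<noteq> wv m" if m: "m \<in> {1..l}" "rk l r k \<le> rk l r m" for m
    proof
      assume "uu k = wv m"
      then have "ua l r k \<in> Ss l r m" "ub l r k \<in> Ss l r m" using memb[OF m(1)] uu[OF k] ur by auto
      then show False using F1[OF l4 r k m] by blast
    qed
    show "uu k \<notin> wv ` {m\<in>{1..l}. rk l r k \<le> rk l r m}" using notw by auto
    have "uu k \<in> D k" using uu[OF k] uab_self[OF l4 r, of k] by metis
    then show "E (uu k) (wv k)" using clique_edge[of V E "D k"] cl k wvD[OF k] notw[OF k] by auto
    show "(\<forall>m\<in>{1..l}. rk l r k < rk l r m \<longrightarrow> \<not> E (uu k) (wv m)) \<or> (\<forall>m\<in>{1..l}. rk l r k < rk l r m \<longrightarrow> \<not> E (wv k) (wv m))"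
    proof (cases "k = 1")
      case True
      have "\<not> E (wv k) (wv m)" if m: "m \<in> {1..l}" "rk l r k < rk l r m" for m
      proof
        assume "E (wv k) (wv m)"
        moreover have "wv k = p" using True by (simp add: wv_def)
        ultimately have "E p (wv m)" by simp
        then obtain s where s: "s \<in> {1..l}" "p \<in> D s" "wv m \<in> D s" using edge by blast
        have "s = 1" using p2 s by auto
        then have "1 \<in> Ss l r m" using memb[OF m(1)] s by auto
        moreover have "m \<noteq> 1" using m True by auto
        ultimately show False using F3[OF l4 r m(1)] by blast
      qed
      then show ?thesis by blast
    next
      case False
      have "\<not> E (uu k) (wv m)" if m: "m \<in> {1..l}" "rk l r k < rk l r m" for m
      proof
        assume "E (uu k) (wv m)"
        then obtain s where s: "s \<in> {1..l}" "uu k \<in> D s" "wv m \<in> D s" using edge by blast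
        have "s \<in> Ss l r m" using memb[OF m(1)] s by auto
        moreover have "s = ua l r k \<or> s = ub l r k" using uukey[OF k s(1,2)] .
        ultimately show False using F2[OF l4 r k m(1) False m(2)] by auto
      qed
      then show ?thesis by blast
    qed
  qed
  have reach: "pzf_reach V E (V - wv ` {1..l}) V"
    by (rule force_rank[OF G _ wvV injw rk_inj[OF l4 r] H]) auto
  show ?thesis
  proof (intro exI conjI)
    show "pzf_set V E (V - wv ` {1..l})" using reach by (simp add: pzf_set_def)
    have "card (wv ` {1..l}) = l" using card_image[OF injw] by simp
    then show "card (V - wv ` {1..l}) = card V - l" using card_Diff_subset[OF _ wvV] finV
      by (metis finite_subset wvV)
  qed
qed



definition rho :: "nat \<Rightarrow> nat \<Rightarrow> nat \<Rightarrow> nat" where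
  "rho l i t = (if t + i - 1 \<le> l then t + i - 1 else t + i - 1 - l)"
definition rinv :: "nat \<Rightarrow> nat \<Rightarrow> nat \<Rightarrow> nat" where
  "rinv l i s = (if i \<le> s then s - i + 1 else s + l - i + 1)"

context fixes l i :: nat assumes i: "i \<in> {1..l}"
begin
lemma rho_range: "t \<in> {1..l} \<Longrightarrow> rho l i t \<in> {1..l}" using i by (auto simp: rho_def)
lemma rinv_range: "s \<in> {1..l} \<Longrightarrow> rinv l i s \<in> {1..l}" using i by (auto simp: rinv_def)
lemma rho_rinv: "s \<in> {1..l} \<Longrightarrow> rho l i (rinv l i s) = s" using i by (auto simp: rho_def rinv_def)
lemma rho_inj: "t \<in> {1..l} \<Longrightarrow> u \<in> {1..l} \<Longrightarrow> rho l i t = rho l i u \<Longrightarrow> t = u"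
  using i by (auto simp: rho_def split: if_splits)
lemma rho_1: "rho l i 1 = i" using i by (auto simp: rho_def)
lemma rho_adj: "a \<in> {1..l} \<Longrightarrow> b \<in> {1..l} \<Longrightarrow>
   (rho l i b = rho l i a + 1 \<or> rho l i a = rho l i b + 1 \<or> {rho l i a, rho l i b} = {1, l}) \<longleftrightarrow> adj l a b"
  using i unfolding doubleton_eq_iff adj_def rho_def by (auto split: if_splits)
end


definition origadj :: "nat \<Rightarrow> nat \<Rightarrow> nat \<Rightarrow> bool" where
  "origadj l x y \<longleftrightarrow> (y = x + 1 \<or> x = y + 1 \<or> {x, y} = {1, l})"

lemma allpriv:
  fixes C :: "nat \<Rightarrow> 'a set"
  assumes G: "graph V E"
  and cl: "\<forall>t\<in>{1..l}. is_clique V E (C t)"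
  and cov: "\<forall>u v. E u v \<longrightarrow> (\<exists>t\<in>{1..l}. u \<in> C t \<and> v \<in> C t)"
  and ad: "\<forall>a\<in>{1..l}. \<forall>b\<in>{1..l}. a \<noteq> b \<longrightarrow> (C a \<inter> C b \<noteq> {} \<longleftrightarrow> origadj l a b)"
  and l2: "2 \<le> l"
  and priv: "\<forall>t\<in>{1..l}. private_part l C t \<noteq> {}"
  shows "\<exists>B. pzf_set V E B \<and> card B = card V - l"
proof -
  have finV: "finite V" using G by (simp add: graph_def)
  have CV: "t \<in> {1..l} \<Longrightarrow> C t \<subseteq> V" for t using cl by (auto simp: is_clique_def)
  have adI: "C a \<inter> C b \<noteq> {} \<longleftrightarrow> origadj l a b" if "a\<in>{1..l}" "b\<in>{1..l}" "a\<noteq>b" for a b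
    using ad that by blast
  define wv where "wv t = (SOME x. x \<in> private_part l C t)" for t
  have wvp: "wv t \<in> C t \<and> (\<forall>s\<in>{1..l}. s \<noteq> t \<longrightarrow> wv t \<notin> C s)" if t: "t \<in> {1..l}" for t
  proof -
    have "\<exists>x. x \<in> private_part l C t" using priv t by blast
    from someI_ex[OF this] have "wv t \<in> private_part l C t" unfolding wv_def .
    then show ?thesis by (auto simp: private_part_def)
  qed
  have wvV: "wv ` {1..l} \<subseteq> V" using wvp CV by blast
  have injw: "inj_on wv {1..l}"
  proof (rule inj_onI)
    fix s t assume st: "s \<in> {1..l}" "t \<in> {1..l}" "wv s = wv t"
    show "s = t"
    proof (rule ccontr)
      assume "s \<noteq> t"
      then have "wv t \<notin> C s" using wvp[OF st(2)] st(1) by blast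
      then show False using wvp[OF st(1)] st(3) by simp
    qed
  qed
  have H: "\<exists>u\<in>V. u \<notin> wv ` {m\<in>{1..l}. id k \<le> id m} \<and> E u (wv k) \<and>
     ((\<forall>m\<in>{1..l}. id k < id m \<longrightarrow> \<not> E u (wv m)) \<or> (\<forall>m\<in>{1..l}. id k < id m \<longrightarrow> \<not> E (wv k) (wv m)))"
    if k: "k \<in> {1..l}" for k
  proof -
    define k' where "k' = (if k = 1 then 2 else k - 1)"
    have k': "k' \<in> {1..l}" "k' \<noteq> k" using k l2 by (auto simp: k'_def)
    have "origadj l k k'" unfolding origadj_def k'_def using k by auto
    then obtain u where u: "u \<in> C k" "u \<in> C k'" using adI[of k k'] k k' by blast
    have uw: "u \<noteq> wv m" if m: "m \<in> {1..l}" for m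
    proof
      assume "u = wv m"
      moreover have "k \<noteq> m \<or> k' \<noteq> m" using k'(2) by blast
      ultimately show False using wvp[OF m] u k k'(1) by blast
    qed
    have uV: "u \<in> V" using CV k u by blast
    have "E u (wv k)" using cl k u(1) wvp[OF k] uw[OF k] by (auto simp: is_clique_def)
    moreover have "\<not> E (wv k) (wv m)" if m: "m \<in> {1..l}" "k < m" for m
    proof
      assume "E (wv k) (wv m)"
      then obtain s where s: "s \<in> {1..l}" "wv k \<in> C s" "wv m \<in> C s" using cov by blast
      have "s = k" using wvp[OF k] s by blast
      then show False using wvp[OF m(1)] s k m by (metis less_irrefl)
    qed
    ultimately show ?thesis using uV uw by auto
  qed
  have reach: "pzf_reach V E (V - wv ` {1..l}) V"
    by (rule force_rank[OF G _ wvV injw _ H]) auto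
  show ?thesis
  proof (intro exI conjI)
    show "pzf_set V E (V - wv ` {1..l})" using reach by (simp add: pzf_set_def)
    have "card (wv ` {1..l}) = l" using card_image[OF injw] by simp
    then show "card (V - wv ` {1..l}) = card V - l" using card_Diff_subset[OF _ wvV] finV
      by (metis finite_subset wvV)
  qed
qed



lemma three:
  fixes C :: "nat \<Rightarrow> 'a set"
  assumes G: "graph V E"
  and cl: "\<forall>t\<in>{1..l}. is_maximal_clique V E (C t)"
  and inj: "inj_on C {1..l}"
  and cov: "\<forall>u v. E u v \<longrightarrow> (\<exists>t\<in>{1..l}. u \<in> C t \<and> v \<in> C t)"
  and ad: "\<forall>a\<in>{1..l}. \<forall>b\<in>{1..l}. a \<noteq> b \<longrightarrow> (C a \<inter> C b \<noteq> {} \<longleftrightarrow> origadj l a b)"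
  and l3: "l = 3" and ijm: "i \<in> {1..l}" "j \<in> {1..l}" "m \<in> {1..l}" "i \<noteq> j" "i \<noteq> m" "j \<noteq> m"
  and pi: "pi \<in> private_part l C i" and pj: "pj \<in> private_part l C j"
  and pm: "private_part l C m = {}"
  shows "\<exists>B. pzf_set V E B \<and> card B = card V - l"
proof -
  have finV: "finite V" using G by (simp add: graph_def)
  have iscl: "t \<in> {1..l} \<Longrightarrow> is_clique V E (C t)" for t using cl by (auto simp: is_maximal_clique_def)
  have CV: "t \<in> {1..l} \<Longrightarrow> C t \<subseteq> V" for t using iscl by (auto simp: is_clique_def)
  have all: "x = i \<or> x = j \<or> x = m" if "x \<in> {1..l}" for x using that ijm l3 by auto
  have adall: "C a \<inter> C b \<noteq> {}" if ab: "a \<in> {1..l}" "b \<in> {1..l}" "a \<noteq> b" for a b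
  proof -
    have "origadj l a b" using ab l3 unfolding origadj_def by auto
    moreover have "C a \<inter> C b \<noteq> {} \<longleftrightarrow> origadj l a b" using ad ab by blast
    ultimately show ?thesis by blast
  qed
  have pi': "pi \<in> C i" "pi \<notin> C j" "pi \<notin> C m" using pi ijm by (auto simp: private_part_def)
  have pj': "pj \<in> C j" "pj \<notin> C i" "pj \<notin> C m" using pj ijm by (auto simp: private_part_def)
  have pm': "\<forall>x\<in>C m. x \<in> C i \<or> x \<in> C j"
  proof
    fix x assume x: "x \<in> C m"
    have "x \<in> (\<Union>s\<in>{1..l} - {m}. C s)" using pm x unfolding private_part_def by blast
    then obtain s where "s \<in> {1..l}" "s \<noteq> m" "x \<in> C s" by blast
    then show "x \<in> C i \<or> x \<in> C j" using all by blast
  qed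
  have nsub: "\<not> C m \<subseteq> C t" if t: "t \<in> {1..l}" "t \<noteq> m" for t
  proof
    assume sub: "C m \<subseteq> C t"
    have "is_maximal_clique V E (C m)" using cl ijm by blast
    then have "\<forall>D. is_clique V E D \<and> C m \<subseteq> D \<longrightarrow> D = C m" by (simp add: is_maximal_clique_def)
    then have "C t = C m" using iscl[OF t(1)] sub by blast
    moreover have "C t \<noteq> C m" using inj_on_contraD[OF inj t(2) t(1) ijm(3)] .
    ultimately show False by simp
  qed
  obtain x where x: "x \<in> C m" "x \<notin> C j" using nsub[OF ijm(2) ijm(6)] by blast
  have xi: "x \<in> C i" using pm' x by blast
  obtain y where y: "y \<in> C m" "y \<notin> C i" using nsub[OF ijm(1) ijm(5)] by blast
  have yj: "y \<in> C j" using pm' y by blast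
  obtain u where u: "u \<in> C i" "u \<in> C j" using adall[of i j] ijm by blast
  have edge: "\<exists>s\<in>{1..l}. a \<in> C s \<and> b \<in> C s" if "E a b" for a b using cov that by blast
  have nbr_i: "b \<in> C i" if e: "E pi b" for b
  proof -
    obtain s where s: "s \<in> {1..l}" "pi \<in> C s" "b \<in> C s" using edge[OF e] by blast
    then have "s = i" using pi by (auto simp: private_part_def)
    then show ?thesis using s by simp
  qed
  have nbr_j: "a \<in> C j" if e: "E a pj" for a
  proof -
    obtain s where s: "s \<in> {1..l}" "a \<in> C s" "pj \<in> C s" using edge[OF e] by blast
    then have "s = j" using pj by (auto simp: private_part_def)
    then show ?thesis using s by simp
  qed
  define wv where "wv t = (if t = i then pi else if t = m then y else pj)" for t
  define rk :: "nat \<Rightarrow> nat" where "rk t = (if t = i then 0 else if t = m then 1 else 2)" for t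
  define I where "I = {i, m, j}"
  have wv3: "wv i = pi" "wv m = y" "wv j = pj" using ijm by (simp_all add: wv_def)
  have wvI: "wv ` I = {pi, y, pj}" using wv3 by (simp add: I_def)
  have CV3: "C i \<subseteq> V" "C m \<subseteq> V" "C j \<subseteq> V" using CV ijm by auto
  have wvV: "wv ` I \<subseteq> V" unfolding wvI using CV3 pi'(1) y(1) pj'(1) by auto
  have d1: "pi \<noteq> y" "pi \<noteq> pj" "y \<noteq> pj" using pi' pj' y by auto
  have injw: "inj_on wv I" using ijm d1 by (simp add: inj_on_def wv_def I_def) 
  have injr: "inj_on rk I" using ijm by (auto simp: inj_on_def rk_def I_def)
  have uV: "u \<in> V" using CV u ijm by blast
  have xV: "x \<in> V" using CV x ijm by blast
  have u_nw: "u \<notin> wv ` I" using wvI u pi' pj' y by auto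
  have x_nw: "x \<notin> wv ` I" using wvI x xi pi' pj' y yj by auto
  have H: "\<exists>u\<in>V. u \<notin> wv ` {m\<in>I. rk k \<le> rk m} \<and> E u (wv k) \<and>
     ((\<forall>m\<in>I. rk k < rk m \<longrightarrow> \<not> E u (wv m)) \<or> (\<forall>m\<in>I. rk k < rk m \<longrightarrow> \<not> E (wv k) (wv m)))"
    if k: "k \<in> I" for k
  proof -
    have kc: "k = i \<or> k = m \<or> k = j" using k by (auto simp: I_def)
    then show ?thesis
    proof (elim disjE)
      assume ki: "k = i"
      have "E u pi" using iscl[of i] ijm u pi' by (auto simp: is_clique_def)
      moreover have "\<forall>m'\<in>I. rk k < rk m' \<longrightarrow> \<not> E (wv k) (wv m')"
      proof -
        have "\<not> E pi y" using nbr_i y(2) by blast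
        moreover have "\<not> E pi pj" using nbr_i pj'(2) by blast
        ultimately show ?thesis using ki ijm by (simp add: I_def wv_def rk_def)
      qed
      ultimately show ?thesis using uV u_nw ki by (intro bexI[of _ u]) (auto simp: wv_def)
    next
      assume km: "k = m"
      have "E x y" using iscl[of m] ijm x y yj by (auto simp: is_clique_def)
      moreover have "\<forall>m'\<in>I. rk k < rk m' \<longrightarrow> \<not> E x (wv m')"
      proof -
        have "\<not> E x pj" using nbr_j x(2) by blast
        then show ?thesis using km ijm by (simp add: I_def wv_def rk_def)
      qed
      ultimately show ?thesis using xV x_nw km ijm by (intro bexI[of _ x]) (auto simp: wv_def)
    next
      assume kj: "k = j"
      have "E u pj" using iscl[of j] ijm u pj' by (auto simp: is_clique_def)
      moreover have "\<forall>m'\<in>I. rk k < rk m' \<longrightarrow> \<not> E u (wv m')"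
        using kj ijm by (simp add: I_def rk_def)
      ultimately show ?thesis using uV u_nw kj ijm by (intro bexI[of _ u]) (auto simp: wv_def)
    qed
  qed
  have reach: "pzf_reach V E (V - wv ` I) V"
    by (rule force_rank[OF G _ wvV injw injr H]) (auto simp: I_def)
  show ?thesis
  proof (intro exI conjI)
    show "pzf_set V E (V - wv ` I)" using reach by (simp add: pzf_set_def)
    have "card I = 3" using ijm by (auto simp: I_def)
    then have "card (wv ` I) = l" using card_image[OF injw] l3 by simp
    then show "card (V - wv ` I) = card V - l" using card_Diff_subset[OF _ wvV] finV
      by (metis finite_subset wvV)
  qed
qed


theorem mainTheorem9:
  fixes V :: "'a set" and E :: "'a \<Rightarrow> 'a \<Rightarrow> bool" and l :: nat and C :: "nat \<Rightarrow> 'a set"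
  assumes "graph V E"
    and "cycle_of_cliques V E l C"
    and "i \<in> {1..l}" and "j \<in> {1..l}" and "i \<noteq> j"
    and "private_part l C i \<noteq> {}" and "private_part l C j \<noteq> {}"
  shows "Z_plus V E = card V - cc V E"
proof -
  note G = assms(1)
  have iI: "i \<in> {1..l}" and jI: "j \<in> {1..l}" and ij: "i \<noteq> j" using assms by auto
  have injC: "inj_on C {1..l}" and mm: "min_max_clique_covering V E (C ` {1..l})"
    and adC: "\<forall>a\<in>{1..l}. \<forall>b\<in>{1..l}. a \<noteq> b \<longrightarrow> (C a \<inter> C b \<noteq> {} \<longleftrightarrow> (b = a + 1 \<or> a = b + 1 \<or> {a, b} = {1, l}))"
    using assms(2) unfolding cycle_of_cliques_def by blast+
  have ad: "\<forall>a\<in>{1..l}. \<forall>b\<in>{1..l}. a \<noteq> b \<longrightarrow> (C a \<inter> C b \<noteq> {} \<longleftrightarrow> origadj l a b)"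
    using adC unfolding origadj_def .
  have covering: "clique_covering V E (C ` {1..l})" and cardcc: "card (C ` {1..l}) = cc V E"
    and maxc0: "\<forall>K\<in>C ` {1..l}. is_maximal_clique V E K"
    using mm unfolding min_max_clique_covering_def by blast+
  have ccl: "cc V E = l" using card_image[OF injC] cardcc by simp
  have covE: "\<forall>u v. E u v \<longrightarrow> (\<exists>t\<in>{1..l}. u \<in> C t \<and> v \<in> C t)"
    using covering unfolding clique_covering_def by blast
  have maxc: "\<forall>t\<in>{1..l}. is_maximal_clique V E (C t)" using maxc0 by blast
  have clq: "\<forall>t\<in>{1..l}. is_clique V E (C t)" using maxc by (simp add: is_maximal_clique_def)
  have l2: "2 \<le> l" using iI jI ij by auto
  obtain pi where pi: "pi \<in> private_part l C i" using assms(6) by blast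
  obtain pj where pj: "pj \<in> private_part l C j" using assms(7) by blast
  have up: "\<exists>B. pzf_set V E B \<and> card B = card V - l"
  proof (cases "l = 2")
    case True
    have "\<forall>t\<in>{1..l}. private_part l C t \<noteq> {}"
    proof
      fix t assume "t \<in> {1..l}"
      then have "t = i \<or> t = j" using True iI jI ij by auto
      then show "private_part l C t \<noteq> {}" using assms(6,7) by blast
    qed
    then show ?thesis using allpriv[OF G clq covE ad l2] by blast
  next
    case l2': False
    show ?thesis
    proof (cases "l = 3")
      case True
      define m where "m = 6 - i - j"
      have mI0: "(1 \<le> m \<and> m \<le> l) \<and> i \<noteq> m \<and> j \<noteq> m" using True iI jI ij unfolding m_def atLeastAtMost_iff by presburger
      then have mI: "m \<in> {1..l}" "i \<noteq> m" "j \<noteq> m" by auto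
      have allt: "t = i \<or> t = j \<or> t = m" if "t \<in> {1..l}" for t using that True iI jI ij unfolding m_def atLeastAtMost_iff by presburger
      show ?thesis
      proof (cases "private_part l C m = {}")
        case True
        show ?thesis by (rule three[OF G maxc injC covE ad \<open>l = 3\<close> iI jI mI(1) ij mI(2) mI(3) pi pj True])
      next
        case False
        have "\<forall>t\<in>{1..l}. private_part l C t \<noteq> {}"
        proof
          fix t assume "t \<in> {1..l}"
          then have "t = i \<or> t = j \<or> t = m" using allt by blast
          then show "private_part l C t \<noteq> {}" using assms(6,7) False by blast
        qed
        then show ?thesis using allpriv[OF G clq covE ad l2] by blast
      qed
    next
      case False
      have l4: "4 \<le> l" using l2 l2' False by auto
      define D where "D t = C (rho l i t)" for t
      have rr: "rho l i t \<in> {1..l}" if "t \<in> {1..l}" for t using rho_range[OF iI that] .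
      have clD: "\<forall>t\<in>{1..l}. is_clique V E (D t)" using clq rr by (simp add: D_def)
      have covD: "\<forall>u v. E u v \<longrightarrow> (\<exists>t\<in>{1..l}. u \<in> D t \<and> v \<in> D t)"
      proof (intro allI impI)
        fix u v assume "E u v"
        then obtain s where s: "s \<in> {1..l}" "u \<in> C s" "v \<in> C s" using covE by blast
        have "rinv l i s \<in> {1..l}" "rho l i (rinv l i s) = s" using rinv_range[OF iI s(1)] rho_rinv[OF iI s(1)] by auto
        then show "\<exists>t\<in>{1..l}. u \<in> D t \<and> v \<in> D t" using s by (metis D_def)
      qed
      have adD: "\<forall>a\<in>{1..l}. \<forall>b\<in>{1..l}. a \<noteq> b \<longrightarrow> (D a \<inter> D b \<noteq> {} \<longleftrightarrow> adj l a b)"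
      proof (intro ballI impI)
        fix a b assume ab: "a \<in> {1..l}" "b \<in> {1..l}" "a \<noteq> b"
        have ne: "rho l i a \<noteq> rho l i b" using rho_inj[OF iI ab(1) ab(2)] ab(3) by blast
        have "C (rho l i a) \<inter> C (rho l i b) \<noteq> {} \<longleftrightarrow> (rho l i b = rho l i a + 1 \<or> rho l i a = rho l i b + 1 \<or> {rho l i a, rho l i b} = {1, l})"
          using adC rr[OF ab(1)] rr[OF ab(2)] ne by blast
        also have "\<dots> \<longleftrightarrow> adj l a b" using rho_adj[OF iI ab(1) ab(2)] .
        finally show "D a \<inter> D b \<noteq> {} \<longleftrightarrow> adj l a b" by (simp add: D_def)
      qed
      have one: "1 \<in> {1..l}" using l2 by auto
      have r1: "rho l i 1 = i" using rho_1[OF iI] .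
      have p1: "pi \<in> D 1" using pi r1 by (simp add: D_def private_part_def)
      have p2: "\<forall>t\<in>{1..l}. t \<noteq> 1 \<longrightarrow> pi \<notin> D t"
      proof (intro ballI impI)
        fix t assume t: "t \<in> {1..l}" "t \<noteq> 1"
        have "rho l i t \<noteq> i" using rho_inj[OF iI t(1) one] r1 t(2) by auto
        then show "pi \<notin> D t" using pi rr[OF t(1)] by (auto simp: D_def private_part_def)
      qed
      define r where "r = rinv l i j"
      have rI: "r \<in> {1..l}" and rj: "rho l i r = j" using rinv_range[OF iI jI] rho_rinv[OF iI jI] by (auto simp: r_def)
      have q1: "pj \<in> D r" using pj rj by (simp add: D_def private_part_def)
      have q2: "\<forall>t\<in>{1..l}. t \<noteq> r \<longrightarrow> pj \<notin> D t"
      proof (intro ballI impI)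
        fix t assume t: "t \<in> {1..l}" "t \<noteq> r"
        have "rho l i t \<noteq> j" using rho_inj[OF iI t(1) rI] rj t(2) by auto
        then show "pj \<notin> D t" using pj rr[OF t(1)] by (auto simp: D_def private_part_def)
      qed
      have r2: "2 \<le> r" using rI rj r1 ij by (cases "r = 1") auto
      have rl: "r \<le> l" using rI by auto
      show ?thesis by (rule big[OF G clD covD adD l4 p1 p2 q1 q2 r2 rl])
    qed
  qed
  have finV: "finite V" using G by (simp add: graph_def)
  have finF: "finite (C ` {1..l})" by simp
  have low: "card V - l \<le> card B" if B: "pzf_set V E B" for B
  proof -
    have BV: "B \<subseteq> V" and rB: "pzf_reach V E B V" using B by (auto simp: pzf_set_def)
    obtain F where F: "F \<subseteq> C ` {1..l}" "card F + card B = card V" using lower[OF G covering rB BV] by blast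
    have "card F \<le> l" using card_mono[OF finF F(1)] card_image[OF injC] by simp
    then show ?thesis using F(2) by linarith
  qed
  obtain B0 where B0: "pzf_set V E B0" "card B0 = card V - l" using up by blast
  have "Z_plus V E = card V - l"
    unfolding Z_plus_def
  proof (rule Least_equality)
    show "\<exists>B. pzf_set V E B \<and> card B = card V - l" using B0 by blast
  next
    fix k assume "\<exists>B. pzf_set V E B \<and> card B = k"
    then show "card V - l \<le> k" using low by blast
  qed
  then show ?thesis using ccl by simp
qed

end
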